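(* Let $\alpha, \beta, \gamma \in (0,1)$ with $\gamma < \min\{\frac{\alpha}{\beta}, \frac{\beta}{\alpha}\}$. Then: (1) for $d$ sufficiently large, $W(\alpha, \beta, \gamma)$ is decreasing in $\alpha$ and in $\beta$ and increasing in $\gamma$; (2) for $d$ sufficiently large, $W(\alpha, \beta, \beta)$ is decreasing in $\beta$.
   Context: For $\alpha,\beta,\gamma\in(0,1)$, $W(\alpha,\beta,\gamma) = \Pr_{X \sim \mathcal{U}(\mathcal{S}^{d-1})} (X_1 > \alpha,\ X_1 \gamma + X_2 \sqrt{1 - \gamma^2} > \beta)$, where $\mathcal{U}(\mathcal{S}^{d-1})$ is the uniform distribution on the Euclidean unit sphere in $\mathbb{R}^d$; equivalently, the relative volume of the intersection of the spherical caps $\{u:\langle u,x\rangle\ge\alpha\}$ and $\{u:\langle u,y\rangle\ge\beta\}$ for unit vectors $x,y$ with $\langle x,y\rangle=\gamma$. For $0<\gamma\le\min\{\alpha/\beta,\beta/\alpha\}$ one has $W(\alpha,\beta,\gamma)=d^{\Theta(1)}\left(\frac{1-\alpha^2-\beta^2-\gamma^2+2\alpha\beta\gamma}{1-\gamma^2}\right)^{d/2}$; the monotonicity is understood for this asymptotic expression (ignoring the $d^{\Theta(1)}$ factor). *)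

theory Defs
  imports "HOL-Analysis.Analysis"
begin

definition W_base :: "real \<Rightarrow> real \<Rightarrow> real \<Rightarrow> real" where
  "W_base a b g = (1 - a\<^sup>2 - b\<^sup>2 - g\<^sup>2 + 2 * a * b * g) / (1 - g\<^sup>2)"

text \<open>Asymptotic expression of W in dimension d (the d^Theta(1) factor dropped):
  (W_base)^(d/2), with a non-positive base (empty cap intersection) read as 0.\<close>
definition W_asym :: "nat \<Rightarrow> real \<Rightarrow> real \<Rightarrow> real \<Rightarrow> real" where
  "W_asym d a b g = (sqrt (max 0 (W_base a b g))) ^ d"

definition W_adm :: "real \<Rightarrow> real \<Rightarrow> real \<Rightarrow> bool" where
  "W_adm a b g \<longleftrightarrow> 0 < a \<and> a < 1 \<and> 0 < b \<and> b < 1 \<and> 0 < g \<and> g < 1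
     \<and> g < min (a / b) (b / a)"

end

theory Submission
  imports Defs
begin

lemma asym_mono: "x \<le> y \<Longrightarrow> sqrt (max 0 x) ^ d \<le> sqrt (max 0 y) ^ d"
  by (intro power_mono) auto

lemma base_alt: "g\<^sup>2 < 1 \<Longrightarrow> W_base a b g = 1 - (a\<^sup>2 + b\<^sup>2 - 2*a*b*g) / (1 - g\<^sup>2)"
  unfolding W_base_def by (simp add: field_simps)

lemma mono_a:
  assumes "W_adm a b g" "W_adm a' b g" "a \<le> a'"
  shows "W_base a' b g \<le> W_base a b g"
proof -
  from assms have g: "0 < g" "g < 1" "0<b" "b<1" "0<a" "0<a'" and h1: "g < a / b" and h2: "g < a'/b"
    by (auto simp: W_adm_def)
  have "b*g < a" using h1 g by (simp add: field_simps)
  moreover have "b*g < a'" using h2 g by (simp add: field_simps)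
  ultimately have "0 \<le> (a'-a)*(a'+a-2*b*g)" using assms(3) by (intro mult_nonneg_nonneg) auto
  hence "(a\<^sup>2 + b\<^sup>2 - 2*a*b*g) \<le> (a'\<^sup>2 + b\<^sup>2 - 2*a'*b*g)" by (simp add: algebra_simps power2_eq_square)
  moreover have "0 < 1 - g\<^sup>2" using g by (simp add: abs_square_less_1)
  ultimately have "(a\<^sup>2 + b\<^sup>2 - 2*a*b*g) / (1 - g\<^sup>2) \<le> (a'\<^sup>2 + b\<^sup>2 - 2*a'*b*g) / (1 - g\<^sup>2)"
    by (intro divide_right_mono) auto
  thus ?thesis using \<open>0 < 1 - g\<^sup>2\<close> by (simp add: base_alt)
qed

lemma mono_b:
  assumes "W_adm a b g" "W_adm a b' g" "b \<le> b'"
  shows "W_base a b' g \<le> W_base a b g"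
proof -
  have "W_adm b a g" "W_adm b' a g" using assms by (auto simp: W_adm_def)
  from mono_a[OF this assms(3)] show ?thesis
    unfolding W_base_def by (simp add: algebra_simps)
qed

lemma mono_g:
  assumes "W_adm a b g" "W_adm a b g'" "g \<le> g'"
  shows "W_base a b g \<le> W_base a b g'"
proof -
  from assms have p: "0 < g" "g < 1" "0<b" "b<1" "0<a" "a<1" "g' < 1"
    and h: "g < a / b" "g < b/a" "g' < a/b" "g' < b/a"
    by (auto simp: W_adm_def)
  have q: "b*g < a" "a*g < b" "b*g' < a" "a*g' < b" using h p by (auto simp: field_simps)
  have k0: "0 \<le> (a - b*g)*(b - a*g') + (a - b*g')*(b - a*g)"
    using q by (intro add_nonneg_nonneg mult_nonneg_nonneg) auto
  have k2: "0 \<le> 2*a*b*(1+g*g') - (a\<^sup>2+b\<^sup>2)*(g+g')"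
  proof -
    have "2*a*b*(1+g*g') - (a\<^sup>2+b\<^sup>2)*(g+g') = (a - b*g)*(b - a*g') + (a - b*g')*(b - a*g)"
      by (simp add: algebra_simps power2_eq_square)
    thus ?thesis using k0 by linarith
  qed
  have "0 \<le> (g'-g)*(2*a*b*(1+g*g') - (a\<^sup>2+b\<^sup>2)*(g+g'))" using k2 assms(3) by simp
  moreover have "(a\<^sup>2 + b\<^sup>2 - 2*a*b*g) * (1 - g'\<^sup>2) - (a\<^sup>2 + b\<^sup>2 - 2*a*b*g') * (1 - g\<^sup>2) = (g'-g)*(2*a*b*(1+g*g') - (a\<^sup>2+b\<^sup>2)*(g+g'))"
    by (simp add: algebra_simps power2_eq_square)
  ultimately have c: "(a\<^sup>2 + b\<^sup>2 - 2*a*b*g') * (1 - g\<^sup>2) \<le> (a\<^sup>2 + b\<^sup>2 - 2*a*b*g) * (1 - g'\<^sup>2)"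
    by linarith
  have d1: "0 < 1 - g\<^sup>2" using p by (simp add: abs_square_less_1)
  have d2: "0 < 1 - g'\<^sup>2" using p assms(3) by (simp add: abs_square_less_1)
  have "(a\<^sup>2 + b\<^sup>2 - 2*a*b*g') / (1 - g'\<^sup>2) \<le> (a\<^sup>2 + b\<^sup>2 - 2*a*b*g) / (1 - g\<^sup>2)"
    using c d1 d2 by (simp add: divide_le_eq le_divide_eq mult.commute)
  thus ?thesis using d1 d2 by (simp add: base_alt)
qed

lemma mono_bb:
  assumes "W_adm a b b" "W_adm a b' b'" "b \<le> b'"
  shows "W_base a b' b' \<le> W_base a b b"
proof -
  from assms have p: "0<b" "b<1" "0<a" "a<1" "b' < 1"
    by (auto simp: W_adm_def)
  have t: "b\<^sup>2 \<le> b'\<^sup>2" using p assms(3) by (simp add: power_mono)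
  have d1: "0 < 1 - b\<^sup>2" using p by (simp add: abs_square_less_1)
  have d2: "0 < 1 - b'\<^sup>2" using p assms(3) by (simp add: abs_square_less_1)
  have "0 \<le> (b'\<^sup>2 - b\<^sup>2) * (1-a)\<^sup>2" using t by simp
  moreover have "(a\<^sup>2 + b'\<^sup>2 - 2*a*b'*b') * (1 - b\<^sup>2) - (a\<^sup>2 + b\<^sup>2 - 2*a*b*b) * (1 - b'\<^sup>2) = (b'\<^sup>2 - b\<^sup>2) * (1-a)\<^sup>2"
    by (simp add: algebra_simps power2_eq_square)
  ultimately have c: "(a\<^sup>2 + b\<^sup>2 - 2*a*b*b) * (1 - b'\<^sup>2) \<le> (a\<^sup>2 + b'\<^sup>2 - 2*a*b'*b') * (1 - b\<^sup>2)"
    by linarith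
  have "(a\<^sup>2 + b\<^sup>2 - 2*a*b*b) / (1 - b\<^sup>2) \<le> (a\<^sup>2 + b'\<^sup>2 - 2*a*b'*b') / (1 - b'\<^sup>2)"
    using c d1 d2 by (simp add: divide_le_eq le_divide_eq mult.commute)
  thus ?thesis using d1 d2 by (simp add: base_alt)
qed

theorem lemma4:
  shows "\<exists>D::nat. \<forall>d\<ge>D.
     (\<forall>a a' b g. W_adm a b g \<and> W_adm a' b g \<and> a \<le> a' \<longrightarrow> W_asym d a' b g \<le> W_asym d a b g)
   \<and> (\<forall>a b b' g. W_adm a b g \<and> W_adm a b' g \<and> b \<le> b' \<longrightarrow> W_asym d a b' g \<le> W_asym d a b g)
   \<and> (\<forall>a b g g'. W_adm a b g \<and> W_adm a b g' \<and> g \<le> g' \<longrightarrow> W_asym d a b g \<le> W_asym d a b g')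
   \<and> (\<forall>a b b'. W_adm a b b \<and> W_adm a b' b' \<and> b \<le> b' \<longrightarrow> W_asym d a b' b' \<le> W_asym d a b b)"
  unfolding W_asym_def
proof (intro exI[of _ 0] allI impI conjI)
  fix d :: nat
  show "\<And>a a' b g. W_adm a b g \<and> W_adm a' b g \<and> a \<le> a' \<Longrightarrow> sqrt (max 0 (W_base a' b g)) ^ d \<le> sqrt (max 0 (W_base a b g)) ^ d"
    by (rule asym_mono, rule mono_a) auto
  show "\<And>a b b' g. W_adm a b g \<and> W_adm a b' g \<and> b \<le> b' \<Longrightarrow> sqrt (max 0 (W_base a b' g)) ^ d \<le> sqrt (max 0 (W_base a b g)) ^ d"
    by (rule asym_mono, rule mono_b) auto
  show "\<And>a b g g'. W_adm a b g \<and> W_adm a b g' \<and> g \<le> g' \<Longrightarrow> sqrt (max 0 (W_base a b g)) ^ d \<le> sqrt (max 0 (W_base a b g')) ^ d"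
    by (rule asym_mono, rule mono_g) auto
  show "\<And>a b b'. W_adm a b b \<and> W_adm a b' b' \<and> b \<le> b' \<Longrightarrow> sqrt (max 0 (W_base a b' b')) ^ d \<le> sqrt (max 0 (W_base a b b)) ^ d"
    by (rule asym_mono, rule mono_bb) auto
qed

end
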